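(* Let $b\ge 2$ and $k\ge 1$ be integers, set $B=b^k$, let $m\ge 1$ be an integer with $\gcd(m,b)=1$, and let $r$ be an integer with $0\le r<m$. Let $s\ge 1$ be an integer with $s\equiv r\pmod m$ and $\gcd(s,b)=1$. Define $\omega_s:=\operatorname{ord}_{ms}(B)$ and \[ n_s:=\sum_{j=0}^{s-1} B^{j\omega_s}. \] Then: (1) $n_s\equiv r\pmod{m}$; (2) $\mathsf{s}_B(n_s)=\mathsf{s}_b(n_s)=s$; (3) $s\mid n_s$. In particular, $n_s$ is simultaneously $b$-Niven and $B$-Niven.
   Context: For integers $a$ and $N\ge 1$ with $\gcd(a,N)=1$, $\operatorname{ord}_N(a)$ denotes the least positive integer $\omega$ with $a^\omega\equiv 1\pmod N$ (so $\operatorname{ord}_1(a)=1$). For an integer base $g\ge 2$ and a positive integer $c$ with base-$g$ expansion $c=\sum_{i=0}^{L} d_i g^i$, $d_i\in\{0,1,\dots,g-1\}$, $d_L\neq 0$, the base-$g$ digit sum is $\mathsf{s}_g(c)=\sum_{i=0}^L d_i$. A positive integer $c$ is $g$-Niven if $\mathsf{s}_g(c)\mid c$. *)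

theory Defs
  imports "HOL-Number_Theory.Number_Theory"
begin

fun digit_sum :: "nat \<Rightarrow> nat \<Rightarrow> nat" where
  "digit_sum g c = (if g < 2 \<or> c = 0 then 0 else c mod g + digit_sum g (c div g))"

declare digit_sum.simps [simp del]

definition niven :: "nat \<Rightarrow> nat \<Rightarrow> bool" where
  "niven g c \<longleftrightarrow> 0 < c \<and> digit_sum g c dvd c"

end

theory Submission
  imports Defs
begin

lemma ds0: "digit_sum g 0 = 0"
  by (subst digit_sum.simps) simp

lemma ds_step:
  assumes g: "g \<ge> 2" and a: "a < g"
  shows "digit_sum g (a + g * c) = a + digit_sum g c"
proof (cases "a + g * c = 0")
  case True
  then have "a = 0" "c = 0" using g by auto
  then show ?thesis by (simp add: ds0)
next
  case False
  have "(a + g * c) mod g = a" using a by simp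
  moreover have "(a + g * c) div g = c" using a g by simp
  moreover have "digit_sum g (a + g * c) = (a + g * c) mod g + digit_sum g ((a + g * c) div g)"
    using False g by (subst digit_sum.simps) (simp add: ds0)
  ultimately show ?thesis by simp
qed

lemma ds_pow:
  assumes g: "g \<ge> 2"
  shows "digit_sum g (g ^ e * c) = digit_sum g c"
proof (induction e)
  case 0 then show ?case by simp
next
  case (Suc e)
  have "digit_sum g (g ^ Suc e * c) = digit_sum g (0 + g * (g ^ e * c))"
    by (simp add: mult.assoc)
  also have "\<dots> = digit_sum g (g ^ e * c)" using ds_step[OF g, of 0] g by simp
  finally show ?case using Suc by simp
qed

lemma ds_geom:
  assumes g: "g \<ge> 2" and e: "e \<ge> 1"
  shows "digit_sum g (\<Sum>j<s. g ^ (j * e)) = s"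
proof (induction s)
  case 0 then show ?case by (simp add: ds0)
next
  case (Suc s)
  have "(\<Sum>j<Suc s. g ^ (j * e)) = 1 + (\<Sum>j<s. g ^ (Suc j * e))"
    by (subst sum.lessThan_Suc_shift) simp
  also have "(\<Sum>j<s. g ^ (Suc j * e)) = g * (g ^ (e - 1) * (\<Sum>j<s. g ^ (j * e)))"
  proof -
    have "\<And>j. g ^ (Suc j * e) = g * g ^ (e - 1) * g ^ (j * e)"
      using e by (cases e) (simp_all add: power_add)
    then show ?thesis by (simp add: sum_distrib_left mult.assoc)
  qed
  finally have "digit_sum g (\<Sum>j<Suc s. g ^ (j * e))
     = 1 + digit_sum g (g ^ (e - 1) * (\<Sum>j<s. g ^ (j * e)))"
    using ds_step[OF g, of 1] g by simp
  then show ?case using Suc ds_pow[OF g] by simp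
qed

theorem proposition4p1:
  fixes b k m r s :: nat
  assumes "b \<ge> 2" and "k \<ge> 1" and "m \<ge> 1" and "coprime m b"
    and "r < m"
    and "s \<ge> 1" and "[s = r] (mod m)" and "coprime s b"
  defines "B \<equiv> b ^ k"
  defines "\<omega> \<equiv> ord (m * s) B"
  defines "n \<equiv> (\<Sum>j<s. B ^ (j * \<omega>))"
  shows "[n = r] (mod m) \<and> digit_sum B n = s \<and> digit_sum b n = s \<and> s dvd n
         \<and> niven b n \<and> niven B n"
proof -
  have cop: "coprime (m * s) B" unfolding B_def using assms(4,8) by simp
  then have "\<omega> \<noteq> 0" unfolding \<omega>_def using ord_eq_0[of "m*s" B] by blast
  then have w0: "\<omega> \<ge> 1" by simp
  have B2: "B \<ge> 2" unfolding B_def using assms(1,2)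
    using power_increasing[of 1 k b] by simp
  have w1: "[B ^ \<omega> = 1] (mod m * s)" unfolding \<omega>_def using ord_works by blast
  have "[n = (\<Sum>j<s. 1)] (mod m * s)" unfolding n_def
  proof (rule cong_sum)
    fix j show "[B ^ (j * \<omega>) = 1] (mod m * s)"
      using cong_pow[OF w1, of j] by (simp add: power_mult mult.commute)
  qed
  then have ns: "[n = s] (mod m * s)" by simp
  then have "[n = s] (mod m)" using cong_modulus_mult_nat by blast
  then have c1: "[n = r] (mod m)" using assms(7) cong_trans by blast
  have nss: "[n = s] (mod s)" using cong_dvd_modulus_nat[OF ns, of s] by simp
  have dv: "s dvd n" using cong_dvd_iff[OF nss] by simp
  have dB: "digit_sum B n = s" unfolding n_def using ds_geom[OF B2 w0] .
  have "n = (\<Sum>j<s. b ^ (j * (k * \<omega>)))" unfolding n_def B_def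
    by (simp add: power_mult[symmetric] mult.commute mult.left_commute)
  moreover have "k * \<omega> \<ge> 1" using assms(2) w0 by simp
  ultimately have db: "digit_sum b n = s" using ds_geom[OF assms(1)] by simp
  have pos: "0 < n" unfolding n_def using assms(6)
    by (intro sum_pos2[of _ 0]) (auto simp: B_def)
  show ?thesis using c1 dB db dv pos by (simp add: niven_def)
qed

end
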